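(* Let $m\ge1$, and for $k=1,\dots,m$ let $0<\lambda_k\le1$, $A_k\ge0$, $p_k\ge1$. Suppose $f\in C^1([0,\infty))$ and $g_k\in L^{p_k}_{loc}([0,\infty))$ satisfy $f\ge0$, $g_k\ge0$, \[ f'(t)\le\sum_{k=1}^m f(t)^{1-\lambda_k}g_k(t),\qquad \|g_k\|_{L^{p_k}([0,t])}\lesssim\langle t\rangle^{A_k} \] for all $t\ge0$. Then $f(t)\lesssim\langle t\rangle^{\Gamma}$ for all $t\ge0$, where $\Gamma=\max_{1\le k\le m}\frac{A_k+1/p_k'}{\lambda_k}$.
   Context: $\langle t\rangle=(1+|t|^2)^{1/2}$; $p_k'$ is the Hölder conjugate exponent of $p_k$ ($1/p_k+1/p_k'=1$). Implicit constants are independent of $t$. *)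

theory Defs
  imports "HOL-Analysis.Analysis"
begin

definition jbr :: "real \<Rightarrow> real" where
  "jbr t = sqrt (1 + t^2)"

text \<open>Real power of a nonnegative base with the convention x^0 = 1
  (Isabelle's powr has 0 powr 0 = 0).\<close>
definition rpow :: "real \<Rightarrow> real \<Rightarrow> real" where
  "rpow x a = (if a = 0 then 1 else x powr a)"

definition Lp_norm_0t :: "real \<Rightarrow> (real \<Rightarrow> real) \<Rightarrow> real \<Rightarrow> real" where
  "Lp_norm_0t p g t = (integral {0..t} (\<lambda>x. \<bar>g x\<bar> powr p)) powr (1 / p)"

end

theory Submission
  imports Defs
begin

lemma young_pt:
  fixes a c p :: real
  assumes "a \<ge> 0" "c > 0" "p \<ge> 1"
  shows "a \<le> c + a powr p / c powr (p - 1)"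
proof (cases "a \<le> c")
  case True
  have "0 \<le> a powr p / c powr (p - 1)" by simp
  then show ?thesis using True by linarith
next
  case False
  then have ac: "a > c" by simp
  have "c powr (p - 1) \<le> a powr (p - 1)"
    using assms ac by (intro powr_mono2) auto
  then have "a * c powr (p - 1) \<le> a * a powr (p - 1)"
    using assms by (intro mult_left_mono) auto
  also have "a * a powr (p - 1) = a powr p"
    using ac assms by (simp add: powr_mult_base)
  finally have "a \<le> a powr p / c powr (p - 1)"
    using assms by (simp add: field_simps)
  then show ?thesis using assms by linarith
qed

lemma int_bound:
  fixes p B J T I A :: real
  assumes p: "p \<ge> 1" and B: "B > 0" and J: "J \<ge> 1" and T: "0 \<le> T" "T \<le> J"
    and I: "I \<ge> 0" and N: "I powr (1/p) \<le> B * J powr A"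
  shows "B * J powr (A - 1/p) * T + I / (B * J powr (A - 1/p)) powr (p - 1)
         \<le> 2 * B * J powr (A + (1 - 1/p))"
proof -
  have J0: "J > 0" using J by simp
  have "I = (I powr (1/p)) powr p" using p I by (simp add: powr_powr)
  also have "\<dots> \<le> (B * J powr A) powr p"
    using p I N by (intro powr_mono2) auto
  also have "\<dots> = B powr p * J powr (A * p)"
    using B J0 by (simp add: powr_mult powr_powr)
  finally have Ile: "I \<le> B powr p * J powr (A * p)" .
  have cp: "(B * J powr (A - 1/p)) powr (p - 1) = B powr (p - 1) * J powr ((A - 1/p) * (p - 1))"
    using B J0 by (simp add: powr_mult powr_powr)
  have cpos: "(B * J powr (A - 1/p)) powr (p - 1) > 0" using B J0 by simp
  have "I / (B * J powr (A - 1/p)) powr (p - 1) \<le> B powr p * J powr (A * p) / (B powr (p - 1) * J powr ((A - 1/p) * (p - 1)))"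
    using Ile cpos cp by (simp add: divide_right_mono)
  also have "\<dots> = B powr (p - (p - 1)) * J powr (A * p - (A - 1/p) * (p - 1))"
    using B J0 by (simp add: powr_diff)
  also have "A * p - (A - 1/p) * (p - 1) = A + (1 - 1/p)"
    using p by (simp add: field_simps)
  finally have t2: "I / (B * J powr (A - 1/p)) powr (p - 1) \<le> B * J powr (A + (1 - 1/p))" using B by simp
  have "B * J powr (A - 1/p) * T \<le> B * J powr (A - 1/p) * J"
    using T B J0 by (intro mult_left_mono) auto
  also have "\<dots> = B * J powr (A + (1 - 1/p))"
  proof -
    have "J powr (A - 1/p) * J = J powr (A - 1/p) * J powr 1" using J0 by simp
    also have "\<dots> = J powr (A - 1/p + 1)" by (rule powr_add[symmetric])
    also have "A - 1/p + 1 = A + (1 - 1/p)" by simp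
    finally show ?thesis by simp
  qed
  finally show ?thesis using t2 by linarith
qed

lemma rpow_pos: "x > 0 \<Longrightarrow> rpow x a = x powr a"
  by (simp add: rpow_def)

lemma final_alg:
  fixes K :: "nat set" and M f0 J G :: real and lam e D :: "nat \<Rightarrow> real"
  assumes K: "finite K" and M: "M \<ge> 0" and f0: "f0 \<ge> 0" and J: "J \<ge> 1" and G: "G \<ge> 0"
    and lam: "\<And>k. k \<in> K \<Longrightarrow> 0 < lam k \<and> lam k \<le> 1"
    and D: "\<And>k. k \<in> K \<Longrightarrow> D k \<ge> 0"
    and eG: "\<And>k. k \<in> K \<Longrightarrow> e k / lam k \<le> G"
    and Mle: "M \<le> f0 + (\<Sum>k\<in>K. rpow M (1 - lam k) * (D k * J powr e k))"
  shows "M \<le> ((real (card K) + 1) * f0 + (\<Sum>k\<in>K. ((real (card K) + 1) * D k) powr (1 / lam k))) * J powr G"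
proof (rule ccontr)
  define n where "n = real (card K) + 1"
  define L where "L = J powr G"
  have n: "n \<ge> 1" unfolding n_def by simp
  have L: "L \<ge> 1" unfolding L_def using J G by (simp add: ge_one_powr_ge_zero)
  assume "\<not> ?thesis"
  then have Mgt: "M > (n * f0 + (\<Sum>k\<in>K. (n * D k) powr (1 / lam k))) * L"
    unfolding n_def L_def by simp
  have S0: "(\<Sum>k\<in>K. (n * D k) powr (1 / lam k)) \<ge> 0" by (intro sum_nonneg) simp
  have "n * f0 \<le> n * f0 * L" using n f0 L by (simp add: mult_le_cancel_left1 mult_nonneg_nonneg) (smt (verit) mult_nonneg_nonneg)
  also have "\<dots> \<le> (n * f0 + (\<Sum>k\<in>K. (n * D k) powr (1 / lam k))) * L"
    using S0 L by (simp add: distrib_right)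
  finally have f0lt: "n * f0 < M" using Mgt by linarith
  have "n * f0 \<ge> 0" using n f0 by simp
  hence Mpos: "M > 0" using f0lt by linarith
  have trm: "rpow M (1 - lam k) * (D k * J powr e k) \<le> M / n" if k: "k \<in> K" for k
  proof (cases "D k = 0")
    case True then show ?thesis using Mpos n by simp
  next
    case False
    then have Dp: "D k > 0" using D k by force
    have lk: "0 < lam k" "lam k \<le> 1" using lam k by auto
    have "(n * D k) powr (1 / lam k) * L \<le> (\<Sum>k\<in>K. (n * D k) powr (1 / lam k)) * L"
      using L k K by (intro mult_right_mono member_le_sum) auto
    also have "\<dots> \<le> (n * f0 + (\<Sum>k\<in>K. (n * D k) powr (1 / lam k))) * L"
      using n f0 L by (intro mult_right_mono) auto
    finally have lt: "(n * D k) powr (1 / lam k) * L < M" using Mgt by linarith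
    have "((n * D k) powr (1 / lam k) * L) powr lam k \<le> M powr lam k"
      using lt lk Dp n L by (intro powr_mono2) auto
    moreover have "((n * D k) powr (1 / lam k) * L) powr lam k = n * D k * L powr lam k"
      using lk Dp n L by (simp add: powr_mult powr_powr)
    moreover have "J powr e k \<le> L powr lam k"
    proof -
      have "e k \<le> G * lam k" using eG[OF k] lk by (simp add: divide_le_eq)
      then have "J powr e k \<le> J powr (G * lam k)" using J by (intro powr_mono) auto
      also have "\<dots> = L powr lam k" unfolding L_def using J by (simp add: powr_powr)
      finally show ?thesis .
    qed
    moreover have "n * D k * J powr e k \<le> n * D k * L powr lam k"
      using Dp n \<open>J powr e k \<le> L powr lam k\<close> by (intro mult_left_mono) auto
    ultimately have key: "n * D k * J powr e k \<le> M powr lam k"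
      by linarith
    have "rpow M (1 - lam k) * (D k * J powr e k) = M powr (1 - lam k) * (n * D k * J powr e k) / n"
      using Mpos n by (simp add: rpow_pos)
    also have "\<dots> \<le> M powr (1 - lam k) * M powr lam k / n"
      using key n by (intro divide_right_mono mult_left_mono) auto
    also have "\<dots> = M / n" using Mpos by (simp add: powr_add[symmetric])
    finally show ?thesis .
  qed
  have "(\<Sum>k\<in>K. rpow M (1 - lam k) * (D k * J powr e k)) \<le> (\<Sum>k\<in>K. M / n)"
    by (intro sum_mono trm)
  also have "\<dots> = real (card K) * M / n" by simp
  finally have "M \<le> f0 + real (card K) * M / n" using Mle by linarith
  hence "M * n \<le> f0 * n + real (card K) * M" using n by (simp add: field_simps)
  moreover have "M * n = M * real (card K) + M" unfolding n_def by (simp add: algebra_simps)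
  ultimately have "M \<le> f0 * n" by (simp add: algebra_simps)
  thus False using f0lt by (simp add: mult.commute)
qed

theorem lemma5p4:
  fixes m :: nat and lam A p :: "nat \<Rightarrow> real"
    and f f' :: "real \<Rightarrow> real" and g :: "nat \<Rightarrow> real \<Rightarrow> real"
  assumes m: "m \<ge> 1"
    and lam: "\<And>k. k \<in> {1..m} \<Longrightarrow> 0 < lam k \<and> lam k \<le> 1"
    and A: "\<And>k. k \<in> {1..m} \<Longrightarrow> A k \<ge> 0"
    and p: "\<And>k. k \<in> {1..m} \<Longrightarrow> p k \<ge> 1"
    and f_deriv: "\<And>t. t \<ge> 0 \<Longrightarrow> (f has_real_derivative f' t) (at t within {0..})"
    and f'_cont: "continuous_on {0..} f'"
    and g_Lploc: "\<And>k t. k \<in> {1..m} \<Longrightarrow> t \<ge> 0 \<Longrightarrow>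
                    (\<lambda>x. \<bar>g k x\<bar> powr p k) integrable_on {0..t}"
    and f_nonneg: "\<And>t. t \<ge> 0 \<Longrightarrow> f t \<ge> 0"
    and g_nonneg: "\<And>k t. k \<in> {1..m} \<Longrightarrow> t \<ge> 0 \<Longrightarrow> g k t \<ge> 0"
    and ineq: "\<And>t. t \<ge> 0 \<Longrightarrow> f' t \<le> (\<Sum>k=1..m. rpow (f t) (1 - lam k) * g k t)"
    and g_bound: "\<And>k. k \<in> {1..m} \<Longrightarrow>
                    \<exists>C. \<forall>t\<ge>0. Lp_norm_0t (p k) (g k) t \<le> C * jbr t powr A k"
  shows "\<exists>C. \<forall>t\<ge>0. f t \<le> C * jbr t powr
           (Max ((\<lambda>k. (A k + (1 - 1 / p k)) / lam k) ` {1..m}))"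
proof -
  define G where "G = Max ((\<lambda>k. (A k + (1 - 1 / p k)) / lam k) ` {1..m})"
  have "\<forall>k\<in>{1..m}. \<exists>C. \<forall>t\<ge>0. Lp_norm_0t (p k) (g k) t \<le> C * jbr t powr A k"
    using g_bound by blast
  then obtain Cf where Cf: "\<And>k t. k \<in> {1..m} \<Longrightarrow> t \<ge> 0 \<Longrightarrow> Lp_norm_0t (p k) (g k) t \<le> Cf k * jbr t powr A k"
    by metis
  define B where "B k = max (Cf k) 1" for k
  define D where "D k = 2 * B k" for k
  define e where "e k = A k + (1 - 1 / p k)" for k
  define C where "C = (real (card {1..m}) + 1) * f 0 + (\<Sum>k\<in>{1..m}. ((real (card {1..m}) + 1) * D k) powr (1 / lam k))"
  have Bpos: "B k > 0" for k unfolding B_def by simp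
  have G0: "G \<ge> 0"
  proof -
    have "1 \<in> {1..m}" using m by simp
    have "0 \<le> (A 1 + (1 - 1 / p 1)) / lam 1"
    proof (intro divide_nonneg_pos)
      have "1 / p 1 \<le> 1" using p[of 1] m by simp
      then show "0 \<le> A 1 + (1 - 1 / p 1)" using A[of 1] m by simp
    qed (use lam[of 1] m in auto)
    also have "\<dots> \<le> G" unfolding G_def using \<open>1 \<in> {1..m}\<close> by (intro Max_ge) auto
    finally show ?thesis .
  qed
  have eG: "e k / lam k \<le> G" if "k \<in> {1..m}" for k
    unfolding G_def e_def using that by (intro Max_ge) auto
  show ?thesis unfolding G_def[symmetric]
  proof (intro exI allI impI)
    fix T :: real assume T: "T \<ge> 0"
    define J where "J = jbr T"
    have J1: "J \<ge> 1" unfolding J_def jbr_def by simp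
    have TJ: "T \<le> J" unfolding J_def jbr_def by (simp add: real_le_rsqrt)
    define c where "c k = B k * J powr (A k - 1 / p k)" for k
    have cpos: "c k > 0" for k unfolding c_def using Bpos J1 by simp
    have cont: "continuous_on {0..T} f"
      by (rule DERIV_continuous_on[of _ _ f']) (auto intro: has_field_derivative_subset[OF f_deriv])
    obtain s where s: "s \<in> {0..T}" and smax: "\<And>y. y \<in> {0..T} \<Longrightarrow> f y \<le> f s"
      using continuous_attains_sup[OF _ _ cont] T by auto
    define M where "M = f s"
    have M0: "M \<ge> 0" unfolding M_def using s f_nonneg by auto
    define I where "I k t = integral {0..t} (\<lambda>x. \<bar>g k x\<bar> powr p k)" for k t
    have ftc: "(f' has_integral (f s - f 0)) {0..s}"
      using s by (intro fundamental_theorem_of_calculus)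
        (auto simp: has_real_derivative_iff_has_vector_derivative[symmetric]
              intro!: has_field_derivative_subset[OF f_deriv])
    define h where "h x = (\<Sum>k\<in>{1..m}. rpow M (1 - lam k) * (c k + \<bar>g k x\<bar> powr p k / c k powr (p k - 1)))" for x
    have hint: "(h has_integral (\<Sum>k\<in>{1..m}. rpow M (1 - lam k) * (c k * s + I k s / c k powr (p k - 1)))) {0..s}"
      unfolding h_def
    proof (intro has_integral_sum has_integral_mult_right has_integral_add)
      fix k assume k: "k \<in> {1..m}"
      show "((\<lambda>x. c k) has_integral c k * s) {0..s}"
        using has_integral_const_real[of "c k" 0 s] s by (simp add: content_real mult.commute)
      show "((\<lambda>x. \<bar>g k x\<bar> powr p k / c k powr (p k - 1)) has_integral I k s / c k powr (p k - 1)) {0..s}"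
        unfolding I_def using g_Lploc[OF k, of s] s by (intro has_integral_divide) auto
    qed simp
    have rmono: "rpow x a \<le> rpow y a" if "0 \<le> x" "x \<le> y" "a \<ge> 0" for x y a
      using that by (cases "a = 0") (auto simp: rpow_def intro: powr_mono2)
    have rnn: "rpow x a \<ge> 0" for x a by (simp add: rpow_def)
    have fle: "f' x \<le> h x" if x: "x \<in> {0..s}" for x
    proof -
      have x0: "x \<ge> 0" "x \<in> {0..T}" using x s by auto
      have "f' x \<le> (\<Sum>k=1..m. rpow (f x) (1 - lam k) * g k x)" using ineq x0 by simp
      also have "\<dots> \<le> h x" unfolding h_def
      proof (intro sum_mono)
        fix k assume k: "k \<in> {1..m}"
        have "rpow (f x) (1 - lam k) \<le> rpow M (1 - lam k)"
          using rmono f_nonneg[OF x0(1)] smax[OF x0(2)] lam[OF k] unfolding M_def by auto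
        moreover have "g k x \<le> c k + \<bar>g k x\<bar> powr p k / c k powr (p k - 1)"
          using young_pt[of "g k x" "c k" "p k"] g_nonneg[OF k x0(1)] cpos p[OF k] by simp
        ultimately show "rpow (f x) (1 - lam k) * g k x \<le> rpow M (1 - lam k) * (c k + \<bar>g k x\<bar> powr p k / c k powr (p k - 1))"
          using g_nonneg[OF k x0(1)] rnn by (intro mult_mono) auto
      qed
      finally show ?thesis .
    qed
    have "f s - f 0 \<le> (\<Sum>k\<in>{1..m}. rpow M (1 - lam k) * (c k * s + I k s / c k powr (p k - 1)))"
      by (rule has_integral_le[OF ftc hint fle])
    also have "\<dots> \<le> (\<Sum>k\<in>{1..m}. rpow M (1 - lam k) * (D k * J powr e k))"
    proof (intro sum_mono mult_left_mono rnn)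
      fix k assume k: "k \<in> {1..m}"
      have Is: "I k s \<le> I k T" unfolding I_def using s g_Lploc[OF k] T
        by (intro integral_subset_le) auto
      have IT: "I k T \<ge> 0" unfolding I_def by (intro integral_nonneg g_Lploc[OF k T]) simp
      have "I k T powr (1 / p k) \<le> Cf k * J powr A k"
        using Cf[OF k T] unfolding Lp_norm_0t_def I_def J_def .
      also have "\<dots> \<le> B k * J powr A k" unfolding B_def by (intro mult_right_mono) auto
      finally have N: "I k T powr (1 / p k) \<le> B k * J powr A k" .
      have "c k * s + I k s / c k powr (p k - 1) \<le> c k * T + I k T / c k powr (p k - 1)"
        using s cpos[of k] Is by (intro add_mono mult_left_mono divide_right_mono) auto
      also have "\<dots> \<le> D k * J powr e k"
        using int_bound[OF p[OF k] Bpos J1 T TJ IT N] unfolding c_def D_def e_def by simp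
      finally show "c k * s + I k s / c k powr (p k - 1) \<le> D k * J powr e k" .
    qed
    finally have Mle: "M \<le> f 0 + (\<Sum>k\<in>{1..m}. rpow M (1 - lam k) * (D k * J powr e k))"
      unfolding M_def by linarith
    have "M \<le> C * J powr G" unfolding C_def
      by (rule final_alg[OF _ M0 f_nonneg[of 0] J1 G0 lam _ eG Mle]) (auto simp: D_def intro: less_imp_le[OF Bpos])
    moreover have "f T \<le> M" unfolding M_def using smax T by simp
    ultimately show "f T \<le> C * jbr T powr G" unfolding J_def by simp
  qed
qed

end
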